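(* Let $q$ be a prime power and $\ell$ an odd prime dividing $q-1$. For an integer $n \ge 1$ let $N_q(n)$ denote the number of monic irreducible polynomials of degree $n$ in $\mathbb{F}_q[x]$. Then for every integer $t \ge 0$, $v_\ell(N_q(2^t\ell)) = v_\ell(q-1) - 1$.
   Context: For a prime $\ell$ and nonzero integer $n$, $v_\ell(n)$ is the exponent of the highest power of $\ell$ dividing $n$. *)

theory Defs
  imports "HOL-Computational_Algebra.Computational_Algebra"
begin

definition num_monic_irred :: "'a::{finite,field} itself \<Rightarrow> nat \<Rightarrow> nat" where
  "num_monic_irred _ n =
     card {p :: 'a poly. lead_coeff p = 1 \<and> irreducible p \<and> degree p = n}"

end

theory Submission
  imports Defs "HOL-Number_Theory.Cong"
begin


lemma reindex_one:
  fixes d n q :: nat and G :: "nat \<Rightarrow> nat"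
  assumes d: "d \<ge> 1"
  shows "(\<Sum>j\<in>{1..n}. if j * d \<le> n then G (j * d) else 0) = (\<Sum>k\<in>{1..n}. if d dvd k then G k else 0)"
proof -
  have "(\<Sum>j\<in>{1..n}. if j * d \<le> n then G (j * d) else 0) = (\<Sum>j\<in>{j\<in>{1..n}. j * d \<le> n}. G (j * d))"
    by (simp only: sum.inter_filter[OF finite_atLeastAtMost])
  also have "\<dots> = (\<Sum>k\<in>(\<lambda>j. j * d) ` {j\<in>{1..n}. j * d \<le> n}. G k)"
    by (rule sum.reindex[symmetric, unfolded comp_def]) (use d in \<open>auto simp: inj_on_def\<close>)
  also have "(\<lambda>j. j * d) ` {j\<in>{1..n}. j * d \<le> n} = {k\<in>{1..n}. d dvd k}"
  proof (intro equalityI subsetI)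
    fix k assume "k \<in> (\<lambda>j. j * d) ` {j\<in>{1..n}. j * d \<le> n}"
    then obtain j where "k = j * d" "j \<ge> 1" "j * d \<le> n" by auto
    thus "k \<in> {k\<in>{1..n}. d dvd k}" using d by (auto simp: dvd_def)
  next
    fix k assume k: "k \<in> {k\<in>{1..n}. d dvd k}"
    then obtain j where j: "k = j * d" by (auto elim!: dvdE simp: mult.commute)
    hence "j \<ge> 1" using k by (cases j) auto
    moreover have "j \<le> n" using j k d by (metis atLeastAtMost_iff mem_Collect_eq le_trans mult_le_mono2 mult.right_neutral mult.commute)
    ultimately show "k \<in> (\<lambda>j. j * d) ` {j\<in>{1..n}. j * d \<le> n}" using j k by auto
  qed
  also have "(\<Sum>k\<in>{k\<in>{1..n}. d dvd k}. G k) = (\<Sum>k\<in>{1..n}. if d dvd k then G k else 0)"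
    by (simp only: sum.inter_filter[OF finite_atLeastAtMost])
  finally show ?thesis .
qed

lemma reindex_all:
  fixes N :: "nat \<Rightarrow> nat" and q n :: nat
  shows "(\<Sum>d\<in>{1..n}. N d * (\<Sum>j\<in>{1..n}. d * (if j * d \<le> n then q ^ (n - j * d) else 0)))
       = (\<Sum>k\<in>{1..n}. q ^ (n - k) * (\<Sum>d | d dvd k. d * N d))"
proof -
  have "(\<Sum>k\<in>{1..n}. q ^ (n - k) * (\<Sum>d | d dvd k. d * N d))
      = (\<Sum>k\<in>{1..n}. \<Sum>d\<in>{1..n}. if d dvd k then q ^ (n - k) * (d * N d) else 0)"
  proof (rule sum.cong[OF refl])
    fix k assume k: "k \<in> {1..n}"
    have "{d. d dvd k} = {d\<in>{1..n}. d dvd k}"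
    proof (intro equalityI subsetI)
      fix d assume "d \<in> {d. d dvd k}"
      hence dk: "d dvd k" by simp
      have "k > 0" using k by simp
      hence "d \<le> k" "d \<noteq> 0" using dk by (auto intro: dvd_imp_le)
      thus "d \<in> {d\<in>{1..n}. d dvd k}" using k dk by auto
    qed auto
    hence "(\<Sum>d | d dvd k. d * N d) = (\<Sum>d\<in>{1..n}. if d dvd k then d * N d else 0)"
      by (simp only: sum.inter_filter[OF finite_atLeastAtMost])
    thus "q ^ (n - k) * (\<Sum>d | d dvd k. d * N d) = (\<Sum>d\<in>{1..n}. if d dvd k then q ^ (n - k) * (d * N d) else 0)"
      by (simp add: sum_distrib_left if_distrib cong: if_cong)
  qed
  also have "\<dots> = (\<Sum>d\<in>{1..n}. \<Sum>k\<in>{1..n}. if d dvd k then q ^ (n - k) * (d * N d) else 0)"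
    by (rule sum.swap)
  also have "\<dots> = (\<Sum>d\<in>{1..n}. \<Sum>j\<in>{1..n}. if j * d \<le> n then q ^ (n - j * d) * (d * N d) else 0)"
    by (rule sum.cong[OF refl], rule reindex_one[symmetric]) auto
  also have "\<dots> = (\<Sum>d\<in>{1..n}. N d * (\<Sum>j\<in>{1..n}. d * (if j * d \<le> n then q ^ (n - j * d) else 0)))"
    by (rule sum.cong[OF refl]) (auto simp: sum_distrib_left intro!: sum.cong)
  finally show ?thesis by simp
qed

lemma S_eq:
  fixes S :: "nat \<Rightarrow> nat" and q :: nat
  assumes H: "\<And>n. n * q ^ n = (\<Sum>k\<in>{1..n}. q ^ (n - k) * S k)"
  shows "n \<ge> 1 \<Longrightarrow> S n = q ^ n"
proof (induction n rule: less_induct)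
  case (less n)
  have "n * q ^ n = (\<Sum>k\<in>{1..n}. q ^ (n - k) * S k)" by (rule H)
  also have "{1..n} = insert n {1..n-1}" using less.prems by auto
  also have "(\<Sum>k\<in>insert n {1..n-1}. q ^ (n - k) * S k) = S n + (\<Sum>k\<in>{1..n-1}. q ^ (n - k) * S k)"
    by (subst sum.insert) auto
  also have "(\<Sum>k\<in>{1..n-1}. q ^ (n - k) * S k) = (\<Sum>k\<in>{1..n-1}. q ^ n)"
  proof (rule sum.cong[OF refl])
    fix k assume k: "k \<in> {1..n-1}"
    hence "S k = q ^ k" using less.IH by auto
    moreover have "n - k + k = n" using k by auto
    ultimately show "q ^ (n - k) * S k = q ^ n" by (metis power_add)
  qed
  also have "\<dots> = (n - 1) * q ^ n" by simp
  finally have "n * q ^ n = S n + (n - 1) * q ^ n" .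
  moreover have "n * q ^ n = q ^ n + (n - 1) * q ^ n" using less.prems
    by (metis Suc_diff_1 less_le_trans mult_Suc zero_less_one)
  ultimately show ?case by linarith
qed


lemma divisors_pow2: "{d::nat. d dvd 2 ^ t} = (\<lambda>i. 2 ^ i) ` {..t}"
  using divides_primepow_nat[OF two_is_prime_nat] by auto

lemma sum_divisors_pow2:
  fixes g :: "nat \<Rightarrow> nat"
  shows "(\<Sum>d | d dvd (2::nat) ^ t. g d) = (\<Sum>i\<le>t. g (2 ^ i))"
  unfolding divisors_pow2 by (subst sum.reindex) (auto simp: inj_on_def)

lemma divisors_2l:
  fixes l :: nat
  assumes l: "prime l"
  shows "{d. d dvd 2 ^ t * l} = (\<lambda>i. 2 ^ i) ` {..t} \<union> (\<lambda>i. 2 ^ i * l) ` {..t}"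
proof (intro equalityI subsetI)
  fix d assume "d \<in> {d. d dvd 2 ^ t * l}"
  then obtain b c where d: "d = b * c" "b dvd 2 ^ t" "c dvd l" using division_decomp by blast
  obtain i where i: "i \<le> t" "b = 2 ^ i" using d divides_primepow_nat[OF two_is_prime_nat] by blast
  have "c = 1 \<or> c = l" using d(3) l by (auto simp: prime_nat_iff)
  thus "d \<in> (\<lambda>i. 2 ^ i) ` {..t} \<union> (\<lambda>i. 2 ^ i * l) ` {..t}" using i d by auto
next
  fix d assume "d \<in> (\<lambda>i. 2 ^ i) ` {..t} \<union> (\<lambda>i. 2 ^ i * l) ` {..t}"
  then obtain i where "i \<le> t" "d = 2 ^ i \<or> d = 2 ^ i * l" by auto
  thus "d \<in> {d. d dvd 2 ^ t * l}" by (auto intro: mult_dvd_mono le_imp_power_dvd dvd_mult2)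
qed

lemma sum_divisors_2l:
  fixes g :: "nat \<Rightarrow> nat" and l :: nat
  assumes l: "prime l" "odd l"
  shows "(\<Sum>d | d dvd 2 ^ t * l. g d) = (\<Sum>i\<le>t. g (2 ^ i)) + (\<Sum>i\<le>t. g (2 ^ i * l))"
proof -
  have l0: "l > 0" using l prime_gt_0_nat by blast
  have disj: "(\<lambda>i. 2 ^ i) ` {..t} \<inter> (\<lambda>i. (2::nat) ^ i * l) ` {..t} = {}"
  proof (rule ccontr)
    assume "\<not> ?thesis"
    then obtain i j where e: "(2::nat) ^ i = 2 ^ j * l" by auto
    hence "l dvd 2 ^ i" by simp
    hence "l dvd 2" using l(1) prime_dvd_power by blast
    hence "l = 2 \<or> l = 1" using two_is_prime_nat unfolding prime_nat_iff by blast
    thus False using l by auto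
  qed
  have i1: "inj_on (\<lambda>i. (2::nat) ^ i) {..t}" by (auto simp: inj_on_def)
  have i2: "inj_on (\<lambda>i. (2::nat) ^ i * l) {..t}" using l0 by (auto simp: inj_on_def)
  show ?thesis unfolding divisors_2l[OF l(1)]
    by (subst sum.union_disjoint) (use disj in \<open>auto simp: sum.reindex[OF i1] sum.reindex[OF i2]\<close>)
qed


lemma mult_key:
  fixes l q Q G M R X :: nat
  assumes l: "prime l" and q: "q \<ge> 2"
    and X: "X = Q * (q - 1) * G * R"
    and cQ: "[Q = 1] (mod l)" and cG: "[G = M] (mod l)" and M: "\<not> l dvd M" and cR: "[R = 1] (mod l)"
  shows "X \<noteq> 0 \<and> multiplicity l X = multiplicity l (q - 1)"
proof -
  have l1: "\<not> l dvd 1" using l by (simp add: prime_nat_iff)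
  have nQ: "\<not> l dvd Q" using cong_dvd_iff[OF cQ] l1 by simp
  have nG: "\<not> l dvd G" using cong_dvd_iff[OF cG] M by simp
  have nR: "\<not> l dvd R" using cong_dvd_iff[OF cR] l1 by simp
  have Q0: "Q \<noteq> 0" and G0: "G \<noteq> 0" and R0: "R \<noteq> 0" using nQ nG nR by (auto intro: Nat.gr0I)
  have q0: "q - 1 \<noteq> 0" using q by simp
  have pe: "prime_elem l" using l by simp
  have "multiplicity l X = multiplicity l Q + multiplicity l (q - 1) + multiplicity l G + multiplicity l R"
    unfolding X using Q0 G0 R0 q0 by (simp add: prime_elem_multiplicity_mult_distrib[OF pe])
  also have "\<dots> = multiplicity l (q - 1)" using nQ nG nR by (simp add: not_dvd_imp_multiplicity_0)
  finally show ?thesis using Q0 G0 R0 q0 X by simp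
qed

lemma geom_nat:
  fixes q M :: nat
  assumes "q \<ge> 1"
  shows "q ^ M - 1 = (q - 1) * (\<Sum>i<M. q ^ i)"
proof -
  have "int (q ^ M - 1) = int q ^ M - 1" using assms by (simp add: of_nat_diff)
  also have "\<dots> = (int q - 1) * (\<Sum>i<M. int q ^ i)" by (rule power_diff_1_eq)
  also have "\<dots> = int ((q - 1) * (\<Sum>i<M. q ^ i))" using assms by (simp add: of_nat_diff)
  finally show ?thesis by linarith
qed

lemma geom_cong:
  fixes q M l :: nat
  assumes "[q = 1] (mod l)"
  shows "[(\<Sum>i<M. q ^ i) = M] (mod l)"
proof -
  have "[(\<Sum>i<M. q ^ i) = (\<Sum>i<M. 1)] (mod l)"
    by (rule cong_sum) (use cong_pow[OF assms] in simp)
  thus ?thesis by simp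
qed

lemma not_dvd_M:
  fixes l s :: nat
  assumes l: "prime l" "odd l"
  shows "\<not> l dvd 2 ^ s * (l - 1)"
proof
  assume "l dvd 2 ^ s * (l - 1)"
  hence "l dvd 2 ^ s \<or> l dvd l - 1" using l(1) prime_dvd_mult_iff by blast
  moreover have "\<not> l dvd 2 ^ s"
  proof
    assume "l dvd 2 ^ s"
    hence "l dvd 2" using l(1) prime_dvd_power by blast
    hence "l = 2 \<or> l = 1" using two_is_prime_nat unfolding prime_nat_iff by blast
    thus False using l by auto
  qed
  moreover have "\<not> l dvd l - 1"
  proof
    assume "l dvd l - 1"
    moreover have "l - 1 > 0" using l prime_gt_1_nat by (metis zero_less_diff)
    ultimately have "l \<le> l - 1" by (rule dvd_imp_le)
    thus False using l prime_gt_0_nat by (metis diff_less le_less_trans less_irrefl zero_less_one)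
  qed
  ultimately show False by blast
qed


lemma poly_identity:
  fixes Q X k :: nat
  assumes "X + Q ^ Suc k + Q ^ 2 = Q ^ (2 * Suc k) + Q"
  shows "X = Q * (Q ^ k - 1) * (Q ^ Suc k + Q - 1)"
proof (cases "Q = 0")
  case True
  thus ?thesis using assms by (simp add: power_0_left)
next
  case False
  hence Q1: "Q \<ge> 1" by simp
  have "int X = int (Q ^ (2 * Suc k)) + int Q - int (Q ^ Suc k) - int (Q ^ 2)"
    using arg_cong[OF assms, of int] by simp
  also have "\<dots> = int Q * (int Q ^ k - 1) * (int Q ^ Suc k + int Q - 1)"
    by (simp add: power_mult algebra_simps power2_eq_square)
  also have "\<dots> = int (Q * (Q ^ k - 1) * (Q ^ Suc k + Q - 1))"
    using Q1 by (simp add: of_nat_diff)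
  finally show ?thesis by linarith
qed

lemma final_arith:
  fixes q l t :: nat and N :: "nat \<Rightarrow> nat"
  assumes l: "prime l" "odd l" and ldq: "l dvd q - 1" and q: "q \<ge> 2"
    and S: "\<And>k. k \<ge> 1 \<Longrightarrow> (\<Sum>d | d dvd k. d * N d) = q ^ k"
  shows "multiplicity l (N (2 ^ t * l)) = multiplicity l (q - 1) - 1"
proof -
  define A where "A t = (\<Sum>i\<le>t. 2 ^ i * N (2 ^ i))" for t
  define B where "B t = (\<Sum>i\<le>t. 2 ^ i * l * N (2 ^ i * l))" for t
  have l0: "l \<ge> 1" using prime_gt_0_nat[OF l(1)] by simp
  have hA: "q ^ (2 ^ t) = A t" for t
    using S[of "2 ^ t"] sum_divisors_pow2[of "\<lambda>d. d * N d" t] by (simp add: A_def)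
  have hB: "q ^ (2 ^ t * l) = A t + B t" for t
  proof -
    have "1 \<le> 2 ^ t * l" using l0 by simp
    thus ?thesis using S[of "2 ^ t * l"] sum_divisors_2l[OF l, of "\<lambda>d. d * N d" t]
      by (simp add: A_def B_def mult.assoc)
  qed
  have cq: "[q = 1] (mod l)" using ldq q by (simp add: cong_altdef_nat)
  define X where "X = 2 ^ t * l * N (2 ^ t * l)"
  obtain k where k: "l = Suc k" using l0 by (cases l) auto
  have "\<exists>Q G M R. X = Q * (q - 1) * G * R \<and> [Q = 1] (mod l) \<and> [G = M] (mod l) \<and> \<not> l dvd M \<and> [R = 1] (mod l)"
  proof (cases t)
    case 0
    have "q ^ l = q + X" using hB[of 0] hA[of 0] by (simp add: X_def B_def 0)
    hence "X = q ^ l - q" by simp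
    also have "\<dots> = q * (q ^ k - 1)" using k by (simp add: algebra_simps)
    also have "\<dots> = q * ((q - 1) * (\<Sum>i<k. q ^ i))" using geom_nat[of q k] q by simp
    finally have "X = q * (q - 1) * (\<Sum>i<k. q ^ i) * 1" by simp
    moreover have "\<not> l dvd k" using not_dvd_M[OF l, of 0] k by simp
    ultimately show ?thesis using cq geom_cong[OF cq, of k] cong_refl[of 1 l] by blast
  next
    case (Suc s)
    define Q where "Q = q ^ (2 ^ s)"
    define M where "M = 2 ^ s * k"
    have e1: "q ^ (2 ^ Suc s) = Q ^ 2" by (simp add: Q_def power_mult[symmetric] mult.commute)
    have "2 ^ Suc s * l = 2 ^ s * (2 * Suc k)" using k by simp
    hence e2: "q ^ (2 ^ Suc s * l) = Q ^ (2 * Suc k)" by (simp only: Q_def power_mult)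
    have e3: "q ^ (2 ^ s * l) = Q ^ Suc k" using k by (simp only: Q_def power_mult)
    have e4: "q ^ M = Q ^ k" by (simp add: Q_def M_def power_mult)
    have "A (Suc s) = A s + 2 ^ Suc s * N (2 ^ Suc s)" by (simp add: A_def)
    moreover have "B (Suc s) = B s + X" by (simp add: B_def X_def Suc)
    ultimately have "X + Q ^ Suc k + Q ^ 2 = Q ^ (2 * Suc k) + Q"
      using hA[of s] hA[of "Suc s"] hB[of s] hB[of "Suc s"] e1 e2 e3 by (simp add: Q_def)
    hence "X = Q * (Q ^ k - 1) * (Q ^ Suc k + Q - 1)" by (rule poly_identity)
    also have "Q ^ k - 1 = (q - 1) * (\<Sum>i<M. q ^ i)" using geom_nat[of q M] q e4 by simp
    finally have X: "X = Q * (q - 1) * (\<Sum>i<M. q ^ i) * (Q ^ Suc k + Q - 1)" by (simp add: mult.assoc)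
    have cQ: "[Q = 1] (mod l)" unfolding Q_def using cong_pow[OF cq] by simp
    have "[Q ^ Suc k + Q = 1 + 1] (mod l)"
      using cong_add[OF cong_pow[OF cQ, of "Suc k"] cQ] by simp
    moreover have "Q ^ Suc k + Q = (Q ^ Suc k + Q - 1) + 1"
      using cQ l by (cases Q) (auto simp: cong_def prime_nat_iff)
    ultimately have cR: "[Q ^ Suc k + Q - 1 = 1] (mod l)"
      by (metis cong_add_rcancel_nat)
    have "\<not> l dvd M" using not_dvd_M[OF l, of s] k by (simp add: M_def)
    thus ?thesis using X cQ cR geom_cong[OF cq, of M] by blast
  qed
  then obtain Q G M R where H: "X = Q * (q - 1) * G * R" "[Q = 1] (mod l)" "[G = M] (mod l)"
     "\<not> l dvd M" "[R = 1] (mod l)" by blast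
  have mk: "X \<noteq> 0 \<and> multiplicity l X = multiplicity l (q - 1)"
    by (rule mult_key[OF l(1) q H])
  hence N0: "N (2 ^ t * l) \<noteq> 0" by (auto simp: X_def)
  have pe: "prime_elem l" using l by simp
  have n2: "\<not> l dvd 2 ^ t" using not_dvd_M[OF l, of t] by (metis dvd_mult2)
  have "multiplicity l X = multiplicity l (2 ^ t) + multiplicity l l + multiplicity l (N (2 ^ t * l))"
    unfolding X_def using N0 l0 by (simp add: prime_elem_multiplicity_mult_distrib[OF pe])
  also have "\<dots> = 1 + multiplicity l (N (2 ^ t * l))"
    using n2 pe by (simp add: not_dvd_imp_multiplicity_0 multiplicity_prime)
  finally show ?thesis using mk by simp
qed




definition monics :: "'a::{finite,field} itself \<Rightarrow> nat \<Rightarrow> 'a poly set" where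
  "monics _ m = {p. lead_coeff p = 1 \<and> degree p = m}"

lemma mon_Suc: "monics TYPE('a::{finite,field}) (Suc m) = (\<lambda>(c,p). pCons c p) ` (UNIV \<times> monics TYPE('a) m)"
proof (rule set_eqI)
  fix f :: "'a poly"
  show "f \<in> monics TYPE('a) (Suc m) \<longleftrightarrow> f \<in> (\<lambda>(c,p). pCons c p) ` (UNIV \<times> monics TYPE('a) m)"
  proof
    assume f: "f \<in> monics TYPE('a) (Suc m)"
    obtain a p where fp: "f = pCons a p" by (cases f)
    have "p \<noteq> 0" using f fp by (auto simp: monics_def)
    hence "p \<in> monics TYPE('a) m" using f fp by (auto simp: monics_def)
    thus "f \<in> (\<lambda>(c,p). pCons c p) ` (UNIV \<times> monics TYPE('a) m)" using fp by auto
  next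
    assume "f \<in> (\<lambda>(c,p). pCons c p) ` (UNIV \<times> monics TYPE('a) m)"
    then obtain a p where fp: "f = pCons a p" and p: "p \<in> monics TYPE('a) m" by auto
    have "p \<noteq> 0" using p by (auto simp: monics_def)
    thus "f \<in> monics TYPE('a) (Suc m)" using fp p by (auto simp: monics_def)
  qed
qed

lemma card_mon: "finite (monics TYPE('a::{finite,field}) m) \<and> card (monics TYPE('a) m) = card (UNIV :: 'a set) ^ m"
proof (induction m)
  case 0
  have "monics TYPE('a) 0 = {1}"
    by (auto simp: monics_def elim!: degree_eq_zeroE)
  thus ?case by simp
next
  case (Suc m)
  have inj: "inj_on (\<lambda>(c,p). pCons c p) (UNIV \<times> monics TYPE('a) m)"
    by (auto simp: inj_on_def)
  show ?case using Suc unfolding mon_Suc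
    by (simp add: card_image[OF inj] card_cartesian_product)
qed

lemma card_mon_dvd:
  fixes g :: "'a::{finite,field} poly"
  assumes g: "lead_coeff g = 1" "degree g = k" and kn: "k \<le> n"
  shows "card {f \<in> monics TYPE('a) n. g dvd f} = card (UNIV :: 'a set) ^ (n - k)"
proof -
  have g0: "g \<noteq> 0" using g by auto
  have eq: "{f \<in> monics TYPE('a) n. g dvd f} = (\<lambda>h. g * h) ` monics TYPE('a) (n - k)"
  proof (rule set_eqI, rule iffI)
    fix f assume "f \<in> {f \<in> monics TYPE('a) n. g dvd f}"
    then obtain h where f: "lead_coeff f = 1" "degree f = n" "f = g * h" by (auto simp: monics_def)
    have "h \<noteq> 0" using f by auto
    have "lead_coeff f = lead_coeff g * lead_coeff h" using f(3) by (simp add: lead_coeff_mult)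
    hence "h \<in> monics TYPE('a) (n - k)" using f g g0 \<open>h \<noteq> 0\<close> by (auto simp: monics_def degree_mult_eq)
    thus "f \<in> (\<lambda>h. g * h) ` monics TYPE('a) (n - k)" using f by auto
  next
    fix f assume "f \<in> (\<lambda>h. g * h) ` monics TYPE('a) (n - k)"
    then obtain h where h: "lead_coeff h = 1" "degree h = n - k" "f = g * h" by (auto simp: monics_def)
    have "h \<noteq> 0" using h by auto
    have "lead_coeff (g * h) = lead_coeff g * lead_coeff h" by (simp add: lead_coeff_mult)
    moreover have "degree (g * h) = n" using h g g0 kn \<open>h \<noteq> 0\<close> by (simp add: degree_mult_eq)
    ultimately show "f \<in> {f \<in> monics TYPE('a) n. g dvd f}" using h g by (auto simp: monics_def)
  qed
  have "inj_on (\<lambda>h. g * h) (monics TYPE('a) (n - k))" using g0 by (auto simp: inj_on_def)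
  thus ?thesis unfolding eq using card_mon[where 'a='a] by (simp add: card_image)
qed

lemma card_mon_dvd0:
  fixes g :: "'a::{finite,field} poly"
  assumes g: "degree g > n"
  shows "{f \<in> monics TYPE('a) n. g dvd f} = {}"
proof -
  { fix f assume f: "f \<in> monics TYPE('a) n" "g dvd f"
    hence "f \<noteq> 0" by (auto simp: monics_def)
    hence "degree g \<le> degree f" using f dvd_imp_degree_le by blast
    hence False using f g by (auto simp: monics_def) }
  thus ?thesis by auto
qed

definition irrs :: "'a::{finite,field} itself \<Rightarrow> nat \<Rightarrow> 'a poly set" where
  "irrs _ n = {p. lead_coeff p = 1 \<and> irreducible p \<and> degree p \<le> n}"

lemma finite_monics: "finite (monics TYPE('a::{finite,field}) m)"
  using card_mon by blast

lemma finite_irrs: "finite (irrs TYPE('a::{finite,field}) n)"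
proof -
  have "irrs TYPE('a) n \<subseteq> (\<Union>d\<le>n. monics TYPE('a) d)"
    by (auto simp: irrs_def monics_def)
  thus ?thesis by (rule finite_subset) (simp add: finite_monics)
qed

context
begin

interpretation fpoly:
  normalization_euclidean_semiring_multiplicative where zero = "0 :: 'a :: field poly"
    and one = 1 and plus = plus and minus = minus
    and times = times
    and normalize = "\<lambda>p. smult (inverse (lead_coeff p)) p"
    and unit_factor = "\<lambda>p. [:lead_coeff p:]"
    and euclidean_size = "\<lambda>p. if p = 0 then 0 else 2 ^ degree p"
    and divide = divide and modulo = modulo
  rewrites "dvd.dvd (times :: 'a poly \<Rightarrow> _) = Rings.dvd"
    and "comm_monoid_mult.prod_mset times 1 = prod_mset"
    and "comm_semiring_1.irreducible times 1 0 = irreducible"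
    and "comm_semiring_1.prime_elem times 1 0 = prime_elem"
    and "power.power 1 times = (power :: 'a poly \<Rightarrow> nat \<Rightarrow> 'a poly)"
    and "comm_monoid_mult.prod times 1 = (prod :: ('b \<Rightarrow> 'a poly) \<Rightarrow> _)"
proof -
  show "power.power 1 times = (power :: 'a poly \<Rightarrow> nat \<Rightarrow> 'a poly)" by (simp add: power_dict)
  show "comm_monoid_mult.prod times 1 = (prod :: ('b \<Rightarrow> 'a poly) \<Rightarrow> _)" by (simp add: prod_dict)
  show "dvd.dvd (times :: 'a poly \<Rightarrow> _) = Rings.dvd"
    by (simp add: dvd_dict)
  show "comm_monoid_mult.prod_mset times 1 = prod_mset"
    by (simp add: prod_mset_dict)
  show "comm_semiring_1.irreducible times 1 0 = irreducible"
    by (simp add: irreducible_dict)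
  show "comm_semiring_1.prime_elem times 1 0 = prime_elem"
    by (simp add: prime_elem_dict)
  show "class.normalization_euclidean_semiring_multiplicative divide plus minus (0 :: 'a poly) times 1
    modulo (\<lambda>p. if p = 0 then 0 else 2 ^ degree p)
    (\<lambda>p. [:lead_coeff p:]) (\<lambda>p. smult (inverse (lead_coeff p)) p)"
  proof (standard, fold dvd_dict)
    fix p :: "'a poly"
    show "[:lead_coeff p:] * smult (inverse (lead_coeff p)) p = p"
      by (cases "p = 0") simp_all
  next
    fix p :: "'a poly" assume "is_unit p"
    then show "[:lead_coeff p:] = p"
      by (elim is_unit_polyE) (auto simp: monom_0 one_poly_def field_simps)
  next
    fix p :: "'a poly" assume "p \<noteq> 0"
    then show "is_unit [:lead_coeff p:]"
      by (simp add: is_unit_pCons_iff)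
  next
    fix a b :: "'a poly" assume "is_unit a"
    thus "[:lead_coeff (a * b):] = a * [:lead_coeff b:]"
      by (auto elim!: is_unit_polyE)
  qed (auto simp: lead_coeff_mult Rings.div_mult_mod_eq intro!: degree_mod_less' degree_mult_right_le)
qed

lemma prime_monic_iff:
  fixes p :: "'a::field poly"
  shows "fpoly.prime p \<longleftrightarrow> lead_coeff p = 1 \<and> irreducible p"
proof
  assume p: "fpoly.prime p"
  hence p0: "p \<noteq> 0" and pe: "prime_elem p" and sm: "smult (inverse (lead_coeff p)) p = p"
    by (auto simp: fpoly.prime_def)
  have "lead_coeff (smult (inverse (lead_coeff p)) p) = 1" using p0 by simp
  hence "lead_coeff p = 1" using sm by simp
  moreover have "irreducible p" using pe by (simp add: prime_elem_imp_irreducible)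
  ultimately show "lead_coeff p = 1 \<and> irreducible p" by blast
next
  assume "lead_coeff p = 1 \<and> irreducible p"
  thus "fpoly.prime p" by (auto simp: fpoly.prime_def field_poly_irreducible_imp_prime)
qed

lemma deg_decomp:
  fixes f :: "'a::{finite,field} poly"
  assumes f: "f \<in> monics TYPE('a) n"
  shows "n = (\<Sum>p\<in>irrs TYPE('a) n. \<Sum>j\<in>{1..n}. if p ^ j dvd f then degree p else 0)"
proof -
  have f0: "f \<noteq> 0" and lf: "lead_coeff f = 1" and df: "degree f = n" using f by (auto simp: monics_def)
  have "f = (\<Prod>p\<in>fpoly.prime_factors f. p ^ fpoly.multiplicity p f)"
    using fpoly.prod_prime_factors[OF f0] lf by simp
  hence "n = degree (\<Prod>p\<in>fpoly.prime_factors f. p ^ fpoly.multiplicity p f)" using df by simp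
  also have "\<dots> = (\<Sum>p\<in>fpoly.prime_factors f. fpoly.multiplicity p f * degree p)"
  proof -
    have nz: "x \<noteq> 0" if "x \<in> fpoly.prime_factors f" for x
      using that fpoly.zero_not_in_prime_factors by metis
    have "degree (\<Prod>p\<in>fpoly.prime_factors f. p ^ fpoly.multiplicity p f)
       = (\<Sum>p\<in>fpoly.prime_factors f. degree (p ^ fpoly.multiplicity p f))"
      by (rule degree_prod_sum_eq) (simp add: nz)
    also have "\<dots> = (\<Sum>p\<in>fpoly.prime_factors f. fpoly.multiplicity p f * degree p)"
      by (rule sum.cong[OF refl]) (simp add: degree_power_eq nz)
    finally show ?thesis .
  qed
  also have "\<dots> = (\<Sum>p\<in>irrs TYPE('a) n. fpoly.multiplicity p f * degree p)"
  proof (rule sum.mono_neutral_left)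
    show "finite (irrs TYPE('a) n)" by (rule finite_irrs)
    show "fpoly.prime_factors f \<subseteq> irrs TYPE('a) n"
    proof
      fix p assume p: "p \<in> fpoly.prime_factors f"
      hence pp: "fpoly.prime p" "p dvd f" by (auto simp: fpoly.in_prime_factors_iff)
      hence "degree p \<le> n" using f0 df dvd_imp_degree_le by blast
      thus "p \<in> irrs TYPE('a) n" using pp by (auto simp: irrs_def prime_monic_iff)
    qed
    show "\<forall>p\<in>irrs TYPE('a) n - fpoly.prime_factors f. fpoly.multiplicity p f * degree p = 0"
    proof
      fix p assume p: "p \<in> irrs TYPE('a) n - fpoly.prime_factors f"
      hence "fpoly.prime p" by (auto simp: irrs_def prime_monic_iff)
      hence "\<not> p dvd f" using p f0 by (auto simp: fpoly.in_prime_factors_iff)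
      thus "fpoly.multiplicity p f * degree p = 0" by (simp add: fpoly.not_dvd_imp_multiplicity_0)
    qed
  qed
  also have "\<dots> = (\<Sum>p\<in>irrs TYPE('a) n. \<Sum>j\<in>{1..n}. if p ^ j dvd f then degree p else 0)"
  proof (rule sum.cong[OF refl])
    fix p assume p: "p \<in> irrs TYPE('a) n"
    hence pp: "irreducible p" by (auto simp: irrs_def)
    hence nu: "\<not> is_unit p" and p0: "p \<noteq> 0" by (auto simp: irreducible_def)
    hence dp: "degree p \<ge> 1" using is_unit_iff_degree by fastforce
    define m where "m = fpoly.multiplicity p f"
    have "p ^ m dvd f" unfolding m_def by (rule fpoly.multiplicity_dvd)
    hence "degree (p ^ m) \<le> n" using f0 df dvd_imp_degree_le by blast
    hence "m * degree p \<le> n" by (simp add: degree_power_eq p0)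
    hence mn: "m \<le> n" using dp by (metis le_trans mult_le_mono2 mult.right_neutral)
    have iff: "p ^ j dvd f \<longleftrightarrow> j \<le> m" for j
      using fpoly.power_dvd_iff_le_multiplicity[OF f0 nu] unfolding m_def by blast
    have "{j\<in>{1..n}. p ^ j dvd f} = {1..m}"
      unfolding iff using mn by auto
    hence "(\<Sum>j\<in>{1..n}. if p ^ j dvd f then degree p else 0) = m * degree p"
      by (simp only: sum.inter_filter[symmetric, OF finite_atLeastAtMost]) simp
    thus "fpoly.multiplicity p f * degree p = (\<Sum>j\<in>{1..n}. if p ^ j dvd f then degree p else 0)"
      by (simp add: m_def)
  qed
  finally show ?thesis .
qed

end

lemma count_identity:
  fixes n :: nat
  defines "q \<equiv> card (UNIV :: 'a::{finite,field} set)"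
  shows "n * q ^ n = (\<Sum>d\<in>{1..n}. num_monic_irred TYPE('a) d *
            (\<Sum>j\<in>{1..n}. d * (if j * d \<le> n then q ^ (n - j * d) else 0)))"
proof -
  define F where "F d = (\<Sum>j\<in>{1..n}. d * (if j * d \<le> n then q ^ (n - j * d) else 0))" for d
  let ?M = "monics TYPE('a) n" and ?P = "irrs TYPE('a) n"
  have "n * q ^ n = (\<Sum>f\<in>?M. n)" using card_mon[where 'a='a] by (simp add: q_def)
  also have "\<dots> = (\<Sum>f\<in>?M. \<Sum>p\<in>?P. \<Sum>j\<in>{1..n}. if p ^ j dvd f then degree p else 0)"
    by (rule sum.cong[OF refl]) (rule deg_decomp)
  also have "\<dots> = (\<Sum>p\<in>?P. \<Sum>j\<in>{1..n}. \<Sum>f\<in>?M. if p ^ j dvd f then degree p else 0)"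
    by (subst sum.swap) (subst sum.swap, rule refl)
  also have "\<dots> = (\<Sum>p\<in>?P. F (degree p))"
  proof (rule sum.cong[OF refl])
    fix p assume p: "p \<in> ?P"
    hence lp: "lead_coeff p = 1" by (auto simp: irrs_def)
    hence p0: "p \<noteq> 0" by auto
    show "(\<Sum>j\<in>{1..n}. \<Sum>f\<in>?M. if p ^ j dvd f then degree p else 0) = F (degree p)"
      unfolding F_def
    proof (rule sum.cong[OF refl])
      fix j
      have l: "lead_coeff (p ^ j) = 1" using lp by (simp add: lead_coeff_power)
      have d: "degree (p ^ j) = j * degree p" using p0 by (simp add: degree_power_eq)
      have "(\<Sum>f\<in>?M. if p ^ j dvd f then degree p else 0) = card {f\<in>?M. p ^ j dvd f} * degree p"
        by (simp only: sum.inter_filter[symmetric, OF finite_monics]) simp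
      also have "\<dots> = degree p * (if j * degree p \<le> n then q ^ (n - j * degree p) else 0)"
      proof (cases "j * degree p \<le> n")
        case True
        then show ?thesis using card_mon_dvd[OF l d True] by (simp add: q_def)
      next
        case False
        hence "{f\<in>?M. p ^ j dvd f} = {}" using card_mon_dvd0[of n "p ^ j"] d by simp
        hence "card {f\<in>?M. p ^ j dvd f} = 0" by (metis card.empty)
        then show ?thesis using False by simp
      qed
      finally show "(\<Sum>f\<in>?M. if p ^ j dvd f then degree p else 0) =
          degree p * (if j * degree p \<le> n then q ^ (n - j * degree p) else 0)" .
    qed
  qed
  also have "\<dots> = (\<Sum>d\<in>{1..n}. \<Sum>p\<in>{p\<in>?P. degree p = d}. F (degree p))"
  proof (rule sum.group[symmetric])
    show "finite ?P" by (rule finite_irrs)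
    show "finite {1..n}" by simp
    show "degree ` ?P \<subseteq> {1..n}"
    proof
      fix d assume "d \<in> degree ` ?P"
      then obtain p where p: "p \<in> ?P" "d = degree p" by auto
      hence "irreducible p" "degree p \<le> n" by (auto simp: irrs_def)
      hence "\<not> is_unit p" "p \<noteq> 0" by (auto simp: irreducible_def)
      hence "degree p \<noteq> 0" using is_unit_iff_degree by blast
      thus "d \<in> {1..n}" using p \<open>degree p \<le> n\<close> by auto
    qed
  qed
  also have "\<dots> = (\<Sum>d\<in>{1..n}. num_monic_irred TYPE('a) d * F d)"
  proof (rule sum.cong[OF refl])
    fix d assume d: "d \<in> {1..n}"
    have "{p\<in>?P. degree p = d} = {p :: 'a poly. lead_coeff p = 1 \<and> irreducible p \<and> degree p = d}"
      using d by (auto simp: irrs_def)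
    thus "(\<Sum>p\<in>{p\<in>?P. degree p = d}. F (degree p)) = num_monic_irred TYPE('a) d * F d"
      by (simp add: num_monic_irred_def)
  qed
  finally show ?thesis unfolding F_def .
qed



theorem lemma5p2:
  fixes l t :: nat
  assumes "prime l" and "odd l" and "l dvd card (UNIV :: 'a set) - 1"
  shows "multiplicity l (num_monic_irred TYPE('a::{finite,field}) (2 ^ t * l))
           = multiplicity l (card (UNIV :: 'a set) - 1) - 1"
proof -
  define q where "q = card (UNIV :: 'a set)"
  define N where "N = num_monic_irred TYPE('a)"
  have "card {0 :: 'a, 1} \<le> q" unfolding q_def by (rule card_mono) auto
  hence q2: "q \<ge> 2" by simp
  have H: "n * q ^ n = (\<Sum>k\<in>{1..n}. q ^ (n - k) * (\<Sum>d | d dvd k. d * N d))" for n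
  proof -
    have "n * q ^ n = (\<Sum>d\<in>{1..n}. N d *
            (\<Sum>j\<in>{1..n}. d * (if j * d \<le> n then q ^ (n - j * d) else 0)))"
      unfolding q_def N_def by (rule count_identity)
    also have "\<dots> = (\<Sum>k\<in>{1..n}. q ^ (n - k) * (\<Sum>d | d dvd k. d * N d))"
      by (rule reindex_all)
    finally show ?thesis .
  qed
  have S: "(\<Sum>d | d dvd k. d * N d) = q ^ k" if "k \<ge> 1" for k
    using S_eq[of q "\<lambda>k. \<Sum>d | d dvd k. d * N d", OF H] that by blast
  show ?thesis
    using final_arith[OF assms(1,2) _ q2 S, of t] assms(3) by (simp add: q_def N_def)
qed

end
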